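(* Let $n\geq 3$ and let $K_n$ be the complete graph on $n$ vertices. Then $\chi_{td}(\mathrm{cl}(K_n)) \leq 2\chi_{td}(K_n)$.
   Context: For a simple graph $G$ and a positive integer $k$, a proper $k$-total difference labeling of $G$ is a function $f: V(G)\to\{1,\dots,k\}$, extended to edges by $f(\{u,v\}) = |f(u)-f(v)|$, such that: (i) adjacent vertices receive different labels; (ii) two distinct edges sharing a vertex receive different labels; (iii) no edge receives the same label as either of its endpoints. $\chi_{td}(G)$ denotes the smallest $k$ for which such a labeling exists. The clone $\mathrm{cl}(G)$ of $G$ is the Cartesian product $G\,\square\, K_2$, i.e. two copies of $G$ with each vertex joined by an edge to its corresponding copy. *)

theory Defs
  imports Main
begin

text \<open>A simple graph is given by a vertex set V and a symmetric irreflexive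
edge relation E (only edges between vertices of V are considered).\<close>

definition edge_label :: "('a \<Rightarrow> nat) \<Rightarrow> 'a \<Rightarrow> 'a \<Rightarrow> nat" where
  "edge_label f u v = (if f u \<le> f v then f v - f u else f u - f v)"

definition proper_total_diff_labeling ::
  "'a set \<Rightarrow> ('a \<Rightarrow> 'a \<Rightarrow> bool) \<Rightarrow> nat \<Rightarrow> ('a \<Rightarrow> nat) \<Rightarrow> bool" where
  "proper_total_diff_labeling V E k f \<longleftrightarrow>
     (\<forall>v\<in>V. 1 \<le> f v \<and> f v \<le> k) \<and>
     (\<forall>u\<in>V. \<forall>v\<in>V. E u v \<longrightarrow> f u \<noteq> f v) \<and>
     (\<forall>u\<in>V. \<forall>v\<in>V. \<forall>w\<in>V. E u v \<and> E u w \<and> v \<noteq> w \<longrightarrow>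
        edge_label f u v \<noteq> edge_label f u w) \<and>
     (\<forall>u\<in>V. \<forall>v\<in>V. E u v \<longrightarrow> edge_label f u v \<noteq> f u \<and> edge_label f u v \<noteq> f v)"

definition chi_td :: "'a set \<Rightarrow> ('a \<Rightarrow> 'a \<Rightarrow> bool) \<Rightarrow> nat" where
  "chi_td V E = (LEAST k. k > 0 \<and> (\<exists>f. proper_total_diff_labeling V E k f))"

definition Kn_V :: "nat \<Rightarrow> nat set" where "Kn_V n = {0..<n}"
definition Kn_E :: "nat \<Rightarrow> nat \<Rightarrow> bool" where "Kn_E u v \<longleftrightarrow> u \<noteq> v"

text \<open>Clone cl(G) = G \<box> K_2, vertices V \<times> {False, True}.\<close>
definition clone_V :: "'a set \<Rightarrow> ('a \<times> bool) set" where
  "clone_V V = V \<times> UNIV"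
definition clone_E :: "('a \<Rightarrow> 'a \<Rightarrow> bool) \<Rightarrow> ('a \<times> bool) \<Rightarrow> ('a \<times> bool) \<Rightarrow> bool" where
  "clone_E E x y \<longleftrightarrow> (snd x = snd y \<and> E (fst x) (fst y)) \<or> (fst x = fst y \<and> snd x \<noteq> snd y)"

end

theory Submission
  imports Defs
begin

lemma el_abs: "int (edge_label f u v) = \<bar>int (f u) - int (f v)\<bar>"
  unfolding edge_label_def by auto

lemma aux1: "(b::nat) < a \<Longrightarrow> 3*a \<le> c \<Longrightarrow> 0 < a \<Longrightarrow> \<bar>int a - int b\<bar> \<noteq> \<bar>int a - int c\<bar>"
  by arith
lemma aux2: "(a::nat) > 0 \<Longrightarrow> 3*a \<le> b \<Longrightarrow> b - a \<noteq> a \<and> b - a \<noteq> b"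
  by arith

lemma exists_lab: "proper_total_diff_labeling (Kn_V n) Kn_E (3^n) (\<lambda>i. 3^i)"
proof -
  have pos: "(0::nat) < 3^a" for a by simp
  have mono: "(3::nat)^a < 3^b" if "a < b" for a b using that by simp
  have big: "3 * (3::nat)^a \<le> 3^b" if "a < b" for a b
  proof -
    have "(3::nat)^(Suc a) \<le> 3^b" using that by (intro power_increasing) auto
    then show ?thesis by simp
  qed
  show ?thesis
    unfolding proper_total_diff_labeling_def Kn_V_def Kn_E_def
  proof (intro conjI ballI impI allI)
    fix v assume "v \<in> {0..<n}"
    then show "1 \<le> (3::nat)^v" "(3::nat)^v \<le> 3^n" by (auto simp: power_increasing)
  next
    fix u v :: nat assume "u \<noteq> v" then show "(3::nat)^u \<noteq> 3^v" by simp
  next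
    fix u v w :: nat assume h: "u \<noteq> v \<and> u \<noteq> w \<and> v \<noteq> w"
    show "edge_label (\<lambda>i. 3 ^ i) u v \<noteq> edge_label (\<lambda>i. 3 ^ i) u w"
    proof -
      have A: "int (edge_label (\<lambda>i. 3 ^ i) u v) \<noteq> int (edge_label (\<lambda>i. 3 ^ i) u w)"
        unfolding el_abs
      proof -
        consider "v < u" "w < u" | "v < u" "u < w" | "u < v" "w < u" | "u < v" "u < w"
          using h by linarith
        then show "\<bar>int (3 ^ u) - int (3 ^ v)\<bar> \<noteq> \<bar>int (3 ^ u) - int (3 ^ w)\<bar>"
        proof cases
          case 1 then show ?thesis using mono[of v u] mono[of w u] h by auto
        next
          case 2 then show ?thesis using aux1[OF mono[of v u] big[of u w] pos[of u]] by simp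
        next
          case 3 then show ?thesis using aux1[OF mono[of w u] big[of u v] pos[of u]] by simp
        next
          case 4 then show ?thesis using mono[of u v] mono[of u w] h by auto
        qed
      qed
      then show ?thesis by metis
    qed
  next
    fix u v :: nat assume h: "u \<noteq> v"
    have X: "edge_label (\<lambda>i. 3 ^ i) u v \<noteq> 3 ^ u \<and> edge_label (\<lambda>i. 3 ^ i) u v \<noteq> 3 ^ v"
    proof (cases "u < v")
      case True then show ?thesis proof -
        have "edge_label (\<lambda>i. 3 ^ i) u v = 3^v - 3^u" using mono[of u v] True by (simp add: edge_label_def)
        then show ?thesis using aux2[OF pos[of u] big[OF True]] by simp
      qed
    next
      case False then have "v < u" using h by simp
      then show ?thesis proof -
        have "edge_label (\<lambda>i. 3 ^ i) u v = 3^u - 3^v" using mono[of v u] \<open>v < u\<close> by (simp add: edge_label_def)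
        then show ?thesis using aux2[OF pos[of v] big[OF \<open>v < u\<close>]] by simp
      qed
    qed
    then show "edge_label (\<lambda>i. 3 ^ i) u v \<noteq> 3 ^ u" "edge_label (\<lambda>i. 3 ^ i) u v \<noteq> 3 ^ v" by auto
  qed
qed

definition gl :: "(nat \<Rightarrow> nat) \<Rightarrow> (nat \<Rightarrow> nat) \<Rightarrow> nat \<times> bool \<Rightarrow> nat" where
  "gl f p x = (if snd x then 2 * f (p (fst x)) - 1 else 2 * f (fst x))"

lemma el_sym: "edge_label h x y = edge_label h y x"
  unfolding edge_label_def by auto

lemma gF: "edge_label (gl f p) (a,False) (b,False) = 2 * edge_label f a b"
  unfolding edge_label_def gl_def by auto

lemma gT: "f (p a) \<ge> 1 \<Longrightarrow> f (p b) \<ge> 1 \<Longrightarrow>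
   edge_label (gl f p) (a,True) (b,True) = 2 * edge_label f (p a) (p b)"
  unfolding edge_label_def gl_def by auto

lemma gC: assumes "f (p a) \<ge> 1" shows "odd (edge_label (gl f p) (a,False) (a,True))"
proof -
  have O: "odd (if 2*x \<le> 2*y-1 then 2*y-1-2*x else 2*x-(2*y-1))" if "y \<ge> 1" for x y :: nat
    using that by presburger
  have E: "edge_label (gl f p) (a,False) (a,True) = (if 2*f a \<le> 2*f (p a)-1 then 2*f (p a)-1-2*f a else 2*f a-(2*f (p a)-1))"
    unfolding edge_label_def gl_def by simp
  from O[OF assms, of "f a"] show ?thesis unfolding E .
qed

lemma gC2: "f (p a) \<ge> 1 \<Longrightarrow> f a \<ge> 1 \<Longrightarrow> f a + 1 \<noteq> 2 * f (p a) \<Longrightarrow>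
   edge_label (gl f p) (a,False) (a,True) \<noteq> gl f p (a,True)"
  unfolding edge_label_def gl_def by auto

lemma cE: "clone_E Kn_E (a,s) (b,t) \<longleftrightarrow> (s = t \<and> a \<noteq> b) \<or> (a = b \<and> s \<noteq> t)"
  unfolding clone_E_def Kn_E_def by auto

lemma cV: "(x \<in> clone_V (Kn_V n)) \<longleftrightarrow> fst x < n"
  unfolding clone_V_def Kn_V_def by (cases x) auto

lemma clone_lab_pi:
  assumes f: "proper_total_diff_labeling (Kn_V n) Kn_E k f"
    and pV: "\<forall>v<n. p v < n" and pinj: "inj_on p {0..<n}"
    and pc: "\<forall>v<n. f v + 1 \<noteq> 2 * f (p v)"
  shows "proper_total_diff_labeling (clone_V (Kn_V n)) (clone_E Kn_E) (2*k) (gl f p)"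
proof -
  note F = f[unfolded proper_total_diff_labeling_def Kn_V_def]
  note A = conjunct1[OF F] and B = conjunct1[OF conjunct2[OF F]]
    and C = conjunct1[OF conjunct2[OF conjunct2[OF F]]] and D = conjunct2[OF conjunct2[OF conjunct2[OF F]]]
  have f1: "1 \<le> f v" "f v \<le> k" if "v < n" for v
    using bspec[OF A, of v] that by simp_all
  have f2: "f u \<noteq> f v" if "u < n" "v < n" "u \<noteq> v" for u v
    using bspec[OF bspec[OF B, of u], of v] that by (simp add: Kn_E_def)
  have f3: "edge_label f u v \<noteq> edge_label f u w" if "u < n" "v < n" "w < n" "u \<noteq> v" "u \<noteq> w" "v \<noteq> w" for u v w
    using bspec[OF bspec[OF bspec[OF C, of u], of v], of w] that by (simp add: Kn_E_def)
  have f4: "edge_label f u v \<noteq> f u" "edge_label f u v \<noteq> f v" if "u < n" "v < n" "u \<noteq> v" for u v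
    using bspec[OF bspec[OF D, of u], of v] that by (simp_all add: Kn_E_def)
  have pn: "p a \<noteq> p b" if "a < n" "b < n" "a \<noteq> b" for a b
    using inj_onD[OF pinj, of a b] that by auto
  have pV': "p v < n" if "v < n" for v using pV that by simp
  have fp1: "1 \<le> f (p v)" if "v < n" for v using f1(1)[OF pV'[OF that]] .
  have gpar: "gl f p (a,False) = 2 * f a" "gl f p (a,True) = 2 * f (p a) - 1" for a
    unfolding gl_def by auto
  have evS: "even (edge_label (gl f p) (a,s) (b,s))" if "a < n" "b < n" for a b s
    using gF[of f p a b] gT[of f p a b, OF fp1[OF that(1)] fp1[OF that(2)]] by (cases s) auto
  have oddP: "odd (edge_label (gl f p) (a,s) (a,\<not>s))" if "a < n" for a s
    using gC[of f p a, OF fp1[OF that]] el_sym[of "gl f p" "(a,False)" "(a,True)"] by (cases s) auto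
  have gparity: "even (gl f p (a,False))" "odd (gl f p (a,True))" if "a < n" for a
    using fp1[OF that] unfolding gpar by presburger+
  show ?thesis
    unfolding proper_total_diff_labeling_def
  proof (intro conjI ballI impI)
    fix x assume "x \<in> clone_V (Kn_V n)"
    then obtain a s where x: "x = (a,s)" "a < n" using cV by (cases x) auto
    show "1 \<le> gl f p x" "gl f p x \<le> 2 * k"
      using x f1[of a] f1[of "p a"] pV unfolding gl_def by auto
  next
    fix x y assume "x \<in> clone_V (Kn_V n)" "y \<in> clone_V (Kn_V n)" and e: "clone_E Kn_E x y"
    then obtain a s b t where x: "x = (a,s)" "a < n" "y = (b,t)" "b < n" using cV by (cases x, cases y) auto
    show "gl f p x \<noteq> gl f p y"
    proof (cases "s = t")
      case True
      then have "a \<noteq> b" using e x cE by auto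
      then show ?thesis using True x f2[of a b] f2[of "p a" "p b"] pn[of a b] pV fp1[of a] fp1[of b]
        unfolding gl_def by auto
    next
      case False
      have pa: "even (gl f p (a, False))" "odd (gl f p (a, True))" using gparity x by auto
      have pb: "even (gl f p (b, False))" "odd (gl f p (b, True))" using gparity x by auto
      show ?thesis
      proof (cases s)
        case True
        then have "\<not> t" using False by simp
        then show ?thesis using True x pa pb by (metis (full_types))
      next
        case fs: False
        then have "t" using False by simp
        then show ?thesis using fs x pa pb by (metis (full_types))
      qed
    qed
  next
    fix x y z assume "x \<in> clone_V (Kn_V n)" "y \<in> clone_V (Kn_V n)" "z \<in> clone_V (Kn_V n)"
      and e: "clone_E Kn_E x y \<and> clone_E Kn_E x z \<and> y \<noteq> z"
    then obtain a s b t c r where x: "x = (a,s)" "a < n" "y = (b,t)" "b < n" "z = (c,r)" "c < n"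
      using cV by (cases x, cases y, cases z) auto
    have ey: "(s = t \<and> a \<noteq> b) \<or> (a = b \<and> s \<noteq> t)" and ez: "(s = r \<and> a \<noteq> c) \<or> (a = c \<and> s \<noteq> r)"
      and yz: "(b,t) \<noteq> (c,r)" using e x cE by auto
    show "edge_label (gl f p) x y \<noteq> edge_label (gl f p) x z"
    proof (cases "t = s")
      case ts: True
      show ?thesis
      proof (cases "r = s")
        case rs: True
        have abc: "a \<noteq> b" "a \<noteq> c" "b \<noteq> c" using ey ez yz ts rs by auto
        show ?thesis
        proof (cases s)
          case True
          then show ?thesis using x ts rs gT[of f p a b, OF fp1[of a] fp1[of b]] gT[of f p a c, OF fp1[of a] fp1[of c]]
              f3[of "p a" "p b" "p c"] pV' pn abc by auto
        next
          case False
          then show ?thesis using x ts rs gF[of f p a b] gF[of f p a c] f3[of a b c] abc by auto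
        qed
      next
        case rs: False
        then have "c = a" "r = (\<not> s)" using ez by auto
        then show ?thesis using x ts evS[of a b s] oddP[of a s] by auto
      qed
    next
      case ts: False
      then have tb: "b = a" "t = (\<not> s)" using ey by auto
      then have "r = s" "a \<noteq> c" using ez yz by auto
      then show ?thesis using x tb evS[of a c s] oddP[of a s] by auto
    qed
  next
    fix x y assume "x \<in> clone_V (Kn_V n)" "y \<in> clone_V (Kn_V n)" and e: "clone_E Kn_E x y"
    then obtain a s b t where x: "x = (a,s)" "a < n" "y = (b,t)" "b < n" using cV by (cases x, cases y) auto
    have ey: "(s = t \<and> a \<noteq> b) \<or> (a = b \<and> s \<noteq> t)" using e x cE by auto
    have "edge_label (gl f p) (a,s) (b,t) \<noteq> gl f p (a,s) \<and> edge_label (gl f p) (a,s) (b,t) \<noteq> gl f p (b,t)"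
    proof (cases "t = s")
      case ts: True
      then have ab: "a \<noteq> b" using ey by auto
      show ?thesis
      proof (cases s)
        case True
        then show ?thesis using ts evS[of a b s] gparity[of a] gparity[of b] x by auto
      next
        case False
        then show ?thesis using ts gF[of f p a b] f4[of a b] ab x unfolding gl_def by auto
      qed
    next
      case ts: False
      then have tb: "b = a" "t = (\<not> s)" using ey by auto
      have c1: "edge_label (gl f p) (a,False) (a,True) \<noteq> gl f p (a,True)"
        using gC2[of f p a] fp1[of a] f1[of a] pc x by auto
      have c2: "edge_label (gl f p) (a,False) (a,True) \<noteq> gl f p (a,False)"
        using oddP[of a False] gparity[of a] x by auto
      show ?thesis using c1 c2 tb el_sym[of "gl f p" "(a,False)" "(a,True)"] by (cases s) auto
    qed
    then show "edge_label (gl f p) x y \<noteq> gl f p x" "edge_label (gl f p) x y \<noteq> gl f p y"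
      using x by auto
  qed
qed

lemma f2_of:
  assumes f: "proper_total_diff_labeling (Kn_V n) Kn_E k f" and "u < n" "v < n" "u \<noteq> v"
  shows "f u \<noteq> f v"
proof -
  note F = f[unfolded proper_total_diff_labeling_def Kn_V_def]
  note B = conjunct1[OF conjunct2[OF F]]
  show ?thesis using bspec[OF bspec[OF B, of u], of v] assms(2-4) by (simp add: Kn_E_def)
qed

lemma exists_pi:
  assumes f: "proper_total_diff_labeling (Kn_V n) Kn_E k f" and n: "n \<ge> 2"
  shows "\<exists>p. (\<forall>v<n. p v < n) \<and> inj_on p {0..<n} \<and> (\<forall>v<n. f v + 1 \<noteq> 2 * f (p v))"
proof (cases "\<exists>v0<n. f v0 = 1")
  case True
  then obtain v0 where v0: "v0 < n" "f v0 = 1" by blast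
  define u where "u = (if v0 = 0 then 1 else (0::nat))"
  have u: "u < n" "u \<noteq> v0" using n unfolding u_def by auto
  define p where "p x = (if x = v0 then u else if x = u then v0 else x)" for x
  have fu: "f u \<noteq> 1" using f2_of[OF f u(1) v0(1) u(2)] v0 by simp
  have fo: "f v \<noteq> 1" if "v < n" "v \<noteq> v0" for v using f2_of[OF f that(1) v0(1) that(2)] v0 by simp
  have "(\<forall>v<n. p v < n)" using u v0 unfolding p_def by auto
  moreover have "inj_on p {0..<n}" unfolding inj_on_def p_def by auto
  moreover have "\<forall>v<n. f v + 1 \<noteq> 2 * f (p v)"
  proof (intro allI impI)
    fix v assume v: "v < n"
    show "f v + 1 \<noteq> 2 * f (p v)"
    proof (cases "v = v0")
      case True then show ?thesis using fu v0 unfolding p_def by auto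
    next
      case False
      show ?thesis
      proof (cases "v = u")
        case True then show ?thesis using fu v0 u unfolding p_def by auto
      next
        case nu: False
        then show ?thesis using fo[OF v False] False unfolding p_def by auto
      qed
    qed
  qed
  ultimately show ?thesis by blast
next
  case False
  then have "\<forall>v<n. f v + 1 \<noteq> 2 * f (id v)" by auto
  then show ?thesis by (intro exI[of _ id]) auto
qed

theorem mainTheorem10:
  fixes n :: nat
  assumes "n \<ge> 3"
  shows "chi_td (clone_V (Kn_V n)) (clone_E Kn_E) \<le> 2 * chi_td (Kn_V n) Kn_E"
proof -
  let ?P = "\<lambda>k. k > 0 \<and> (\<exists>f. proper_total_diff_labeling (Kn_V n) Kn_E k f)"
  have ex: "?P (3^n)" using exists_lab[of n] by auto
  have "?P (chi_td (Kn_V n) Kn_E)" unfolding chi_td_def by (rule LeastI[of ?P, OF ex])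
  then obtain f where k0: "chi_td (Kn_V n) Kn_E > 0"
    and f: "proper_total_diff_labeling (Kn_V n) Kn_E (chi_td (Kn_V n) Kn_E) f" by blast
  obtain p where "\<forall>v<n. p v < n" "inj_on p {0..<n}" "\<forall>v<n. f v + 1 \<noteq> 2 * f (p v)"
    using exists_pi[OF f] assms by auto
  from clone_lab_pi[OF f this]
  have "2 * chi_td (Kn_V n) Kn_E > 0 \<and> (\<exists>g. proper_total_diff_labeling (clone_V (Kn_V n)) (clone_E Kn_E) (2 * chi_td (Kn_V n) Kn_E) g)"
    using k0 by auto
  then show ?thesis unfolding chi_td_def[of "clone_V (Kn_V n)"] by (rule Least_le)
qed

end
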